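(* The variety $\mathsf{V}(S_{(4,411)})$ is the ai-semiring variety defined by the identities $xy\approx xy+x$, $x+yx\approx x+yx+xy$, $x_1x_2x_3\approx x_1x_2x_3+x_4$, $x_1x_2+x_3x_4\approx x_1x_2+x_3x_4+x_1x_3$, $x_1x_2+x_3x_4\approx x_1x_2+x_3x_4+x_1x_4$.
   Context: An ai-semiring is an algebra $(S,+,\cdot)$ with $(S,+)$ a semilattice, $(S,\cdot)$ a semigroup, and both distributive laws. $\mathsf{V}(S)$ is the variety generated by $S$; "the ai-semiring variety defined by identities $\Sigma$" is the class of all ai-semirings satisfying $\Sigma$. $S_{(4,411)}$ has carrier $\{1,2,3,4\}$; addition: $x+x=x$, $2+x=x$, $1+x=1$ for all $x$, $3+4=1$; multiplication (row $a$, column $b$ gives $a\cdot b$): row $1$: $1,1,1,1$; row $2$: $1,3,1,3$; row $3$: $1,1,1,1$; row $4$: $1,1,1,1$. *)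

theory Defs
  imports Main
begin

definition ai_semiring :: "('a \<Rightarrow> 'a \<Rightarrow> 'a) \<Rightarrow> ('a \<Rightarrow> 'a \<Rightarrow> 'a) \<Rightarrow> bool" where
  "ai_semiring add mul \<longleftrightarrow>
     (\<forall>x y z. add (add x y) z = add x (add y z)) \<and>
     (\<forall>x y. add x y = add y x) \<and>
     (\<forall>x. add x x = x) \<and>
     (\<forall>x y z. mul (mul x y) z = mul x (mul y z)) \<and>
     (\<forall>x y z. mul x (add y z) = add (mul x y) (mul x z)) \<and>
     (\<forall>x y z. mul (add x y) z = add (mul x z) (mul y z))"

datatype sterm = Var nat | Plus sterm sterm | Times sterm sterm

fun eval :: "('a \<Rightarrow> 'a \<Rightarrow> 'a) \<Rightarrow> ('a \<Rightarrow> 'a \<Rightarrow> 'a) \<Rightarrow> (nat \<Rightarrow> 'a) \<Rightarrow> sterm \<Rightarrow> 'a" where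
  "eval add mul \<rho> (Var n) = \<rho> n"
| "eval add mul \<rho> (Plus s t) = add (eval add mul \<rho> s) (eval add mul \<rho> t)"
| "eval add mul \<rho> (Times s t) = mul (eval add mul \<rho> s) (eval add mul \<rho> t)"

definition satisfies :: "('a \<Rightarrow> 'a \<Rightarrow> 'a) \<Rightarrow> ('a \<Rightarrow> 'a \<Rightarrow> 'a) \<Rightarrow> sterm \<times> sterm \<Rightarrow> bool" where
  "satisfies add mul e \<longleftrightarrow> (\<forall>\<rho>. eval add mul \<rho> (fst e) = eval add mul \<rho> (snd e))"

datatype s4 = E1 | E2 | E3 | E4

fun s4_add :: "s4 \<Rightarrow> s4 \<Rightarrow> s4" where
  "s4_add E1 y = E1"
| "s4_add x E1 = E1"
| "s4_add E2 y = y"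
| "s4_add x E2 = x"
| "s4_add E3 E3 = E3"
| "s4_add E4 E4 = E4"
| "s4_add E3 E4 = E1"
| "s4_add E4 E3 = E1"

fun s4_mul :: "s4 \<Rightarrow> s4 \<Rightarrow> s4" where
  "s4_mul E2 E2 = E3"
| "s4_mul E2 E4 = E3"
| "s4_mul x y = E1"

text \<open>Equational theory Id(S) and the variety V(S) = Mod(Id(S)) (= HSP(S) by Birkhoff).\<close>
definition Id_S4 :: "(sterm \<times> sterm) set" where
  "Id_S4 = {e. satisfies s4_add s4_mul e}"

definition in_V_S4 :: "('a \<Rightarrow> 'a \<Rightarrow> 'a) \<Rightarrow> ('a \<Rightarrow> 'a \<Rightarrow> 'a) \<Rightarrow> bool" where
  "in_V_S4 add mul \<longleftrightarrow> (\<forall>e\<in>Id_S4. satisfies add mul e)"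

end

theory Submission
  imports Defs
begin

fun wl :: "sterm \<Rightarrow> nat list list" where
  "wl (Var n) = [[n]]"
| "wl (Plus s t) = wl s @ wl t"
| "wl (Times s t) = concat (map (\<lambda>a. map (\<lambda>b. a @ b) (wl t)) (wl s))"

fun prodw :: "('a \<Rightarrow> 'a \<Rightarrow> 'a) \<Rightarrow> (nat \<Rightarrow> 'a) \<Rightarrow> nat list \<Rightarrow> 'a" where
  "prodw m \<rho> [] = undefined"
| "prodw m \<rho> [a] = \<rho> a"
| "prodw m \<rho> (a # b # r) = m (\<rho> a) (prodw m \<rho> (b # r))"

fun lsum :: "('a \<Rightarrow> 'a \<Rightarrow> 'a) \<Rightarrow> 'a list \<Rightarrow> 'a" where
  "lsum p [] = undefined"
| "lsum p [a] = a"
| "lsum p (a # b # r) = p a (lsum p (b # r))"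

lemma wl_ne: "wl t \<noteq> []"
  by (induction t) auto

lemma wl_words: "w \<in> set (wl t) \<Longrightarrow> w \<noteq> []"
  by (induction t arbitrary: w) auto

locale ais =
  fixes add mul :: "'a \<Rightarrow> 'a \<Rightarrow> 'a"
  assumes aassoc: "add (add x y) z = add x (add y z)"
    and acomm: "add x y = add y x"
    and aidem: "add x x = x"
    and massoc: "mul (mul x y) z = mul x (mul y z)"
    and ldist: "mul x (add y z) = add (mul x y) (mul x z)"
    and rdist: "mul (add x y) z = add (mul x z) (mul y z)"
begin

lemma lsum_Cons: "xs \<noteq> [] \<Longrightarrow> lsum add (a # xs) = add a (lsum add xs)"
  by (cases xs) auto

lemma lsum_append: "xs \<noteq> [] \<Longrightarrow> ys \<noteq> [] \<Longrightarrow> lsum add (xs @ ys) = add (lsum add xs) (lsum add ys)"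
proof (induction xs)
  case Nil then show ?case by simp
next
  case (Cons a xs)
  show ?case
  proof (cases "xs = []")
    case True then show ?thesis using Cons by (simp add: lsum_Cons)
  next
    case False then show ?thesis using Cons by (simp add: lsum_Cons aassoc)
  qed
qed

lemma prodw_Cons: "xs \<noteq> [] \<Longrightarrow> prodw mul \<rho> (a # xs) = mul (\<rho> a) (prodw mul \<rho> xs)"
  by (cases xs) auto

lemma prodw_append: "xs \<noteq> [] \<Longrightarrow> ys \<noteq> [] \<Longrightarrow> prodw mul \<rho> (xs @ ys) = mul (prodw mul \<rho> xs) (prodw mul \<rho> ys)"
proof (induction xs)
  case Nil then show ?case by simp
next
  case (Cons a xs)
  show ?case
  proof (cases "xs = []")
    case True then show ?thesis using Cons by (simp add: prodw_Cons)
  next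
    case False then show ?thesis using Cons by (simp add: prodw_Cons massoc)
  qed
qed

lemma lsum_mul_left: "ys \<noteq> [] \<Longrightarrow> mul x (lsum add ys) = lsum add (map (mul x) ys)"
proof (induction ys)
  case Nil then show ?case by simp
next
  case (Cons a ys)
  then show ?case by (cases "ys = []") (auto simp: lsum_Cons ldist)
qed

lemma lsum_mul: "xs \<noteq> [] \<Longrightarrow> ys \<noteq> [] \<Longrightarrow>
   mul (lsum add xs) (lsum add ys) = lsum add (concat (map (\<lambda>x. map (mul x) ys) xs))"
proof (induction xs)
  case Nil then show ?case by simp
next
  case (Cons a xs)
  show ?case
  proof (cases "xs = []")
    case True then show ?thesis using Cons by (simp add: lsum_mul_left)
  next
    case False
    have "concat (map (\<lambda>x. map (mul x) ys) xs) \<noteq> []" using False Cons.prems by (cases xs) auto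
    then show ?thesis using Cons False
      by (simp add: lsum_Cons rdist lsum_mul_left lsum_append)
  qed
qed

lemma eval_wl: "eval add mul \<rho> t = lsum add (map (prodw mul \<rho>) (wl t))"
proof (induction t)
  case (Var n) then show ?case by simp
next
  case (Plus s t) then show ?case by (simp add: lsum_append wl_ne)
next
  case (Times s t)
  have "map (prodw mul \<rho>) (concat (map (\<lambda>a. map (\<lambda>b. a @ b) (wl t)) (wl s)))
      = concat (map (\<lambda>x. map (mul x) (map (prodw mul \<rho>) (wl t))) (map (prodw mul \<rho>) (wl s)))"
    by (simp add: map_concat comp_def prodw_append wl_words cong: map_cong)
  then show ?case using Times by (simp add: lsum_mul wl_ne)
qed

definition le :: "'a \<Rightarrow> 'a \<Rightarrow> bool" where "le a b \<longleftrightarrow> add a b = b"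

lemma le_trans: "le a b \<Longrightarrow> le b c \<Longrightarrow> le a c"
  unfolding le_def by (metis aassoc)

lemma le_antisym: "le a b \<Longrightarrow> le b a \<Longrightarrow> a = b"
  unfolding le_def by (metis acomm)

lemma le_sup: "le a c \<Longrightarrow> le b c \<Longrightarrow> le (add a b) c"
  unfolding le_def by (metis aassoc)

lemma le_add1: "le a (add a b)"
  unfolding le_def by (metis aassoc aidem)

lemma le_add2: "le b (add a b)"
  unfolding le_def by (metis aassoc aidem acomm)

lemma le_lsum: "xs \<noteq> [] \<Longrightarrow> le (lsum add xs) c \<longleftrightarrow> (\<forall>x\<in>set xs. le x c)"
proof (induction xs)
  case Nil then show ?case by simp
next
  case (Cons a xs)
  show ?case
  proof (cases "xs = []")
    case True then show ?thesis by simp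
  next
    case False then show ?thesis using Cons
      by (simp add: lsum_Cons) (meson le_sup le_trans le_add1 le_add2)
  qed
qed

lemma mem_le_lsum: "x \<in> set xs \<Longrightarrow> le x (lsum add xs)"
  using le_lsum[of xs "lsum add xs"] unfolding le_def by (metis aidem empty_iff list.set(1))

end


locale M = ais +
  assumes i1: "mul x y = add (mul x y) x"
    and i2: "add x (mul y x) = add (add x (mul y x)) (mul x y)"
    and i3: "mul (mul x1 x2) x3 = add (mul (mul x1 x2) x3) x4"
    and i4: "add (mul x1 x2) (mul x3 x4) = add (add (mul x1 x2) (mul x3 x4)) (mul x1 x3)"
    and i5: "add (mul x1 x2) (mul x3 x4) = add (add (mul x1 x2) (mul x3 x4)) (mul x1 x4)"
begin

lemma lA: "le x (mul x y)"
  unfolding le_def by (metis i1 acomm)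

lemma lB: "le (mul x y) (add x (mul y x))"
  unfolding le_def by (metis i2 acomm)

lemma lC: "le z (mul (mul a b) c)"
  unfolding le_def by (metis i3 acomm)

lemma lD: "le (mul a c) (add (mul a b) (mul c d))"
  unfolding le_def by (metis i4 acomm)

lemma lE: "le (mul a d) (add (mul a b) (mul c d))"
  unfolding le_def by (metis i5 acomm)

lemma long_top: "3 \<le> length w \<Longrightarrow> le z (prodw mul \<rho> w)"
proof -
  assume "3 \<le> length w"
  then obtain a b c r where w: "w = a # b # c # r"
    by (metis One_nat_def Suc_le_length_iff numeral_3_eq_3)
  have "prodw mul \<rho> w = mul (mul (\<rho> a) (\<rho> b)) (prodw mul \<rho> (c # r))"
    by (simp add: w massoc)
  then show ?thesis using lC by simp
qed

end

lemma s4_ais: "ais s4_add s4_mul"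
  apply unfold_locales
  subgoal for x y z by (cases x; cases y; cases z; simp)
  subgoal for x y by (cases x; cases y; simp)
  subgoal for x by (cases x; simp)
  subgoal for x y z by (cases x; cases y; cases z; simp)
  subgoal for x y z by (cases x; cases y; cases z; simp)
  subgoal for x y z by (cases x; cases y; cases z; simp)
  done


interpretation S4: ais s4_add s4_mul by (rule s4_ais)

lemma s4_add_14: "s4_add a b \<in> {E1, E4} \<longleftrightarrow> a \<in> {E1, E4} \<or> b \<in> {E1, E4}"
  by (cases a; cases b; simp)

lemma s4_add_4: "s4_add a b = E4 \<Longrightarrow> a = E4 \<or> b = E4"
  by (cases a; cases b; simp)

lemma s4_S2: "xs \<noteq> [] \<Longrightarrow> (lsum s4_add xs \<in> {E1, E4} \<longleftrightarrow> (\<exists>x\<in>set xs. x \<in> {E1, E4}))"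
proof (induction xs)
  case Nil then show ?case by simp
next
  case (Cons a xs)
  show ?case
  proof (cases "xs = []")
    case True then show ?thesis by simp
  next
    case False
    then have "lsum s4_add (a # xs) = s4_add a (lsum s4_add xs)" by (rule S4.lsum_Cons)
    then show ?thesis using Cons.IH[OF False] s4_add_14[of a "lsum s4_add xs"] by auto
  qed
qed

lemma s4_S4: "xs \<noteq> [] \<Longrightarrow> lsum s4_add xs = E4 \<Longrightarrow> E4 \<in> set xs"
proof (induction xs)
  case Nil then show ?case by simp
next
  case (Cons a xs)
  then show ?case
    by (cases "xs = []") (simp, auto simp: S4.lsum_Cons dest: s4_add_4)
qed

lemma s4_S1: "xs \<noteq> [] \<Longrightarrow> E4 \<notin> set xs \<Longrightarrow> (lsum s4_add xs = E1 \<longleftrightarrow> E1 \<in> set xs)"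
proof -
  assume a: "xs \<noteq> []" "E4 \<notin> set xs"
  then have "lsum s4_add xs \<noteq> E4" using s4_S4 by blast
  then have "lsum s4_add xs = E1 \<longleftrightarrow> lsum s4_add xs \<in> {E1, E4}" by auto
  also have "\<dots> \<longleftrightarrow> (\<exists>x\<in>set xs. x \<in> {E1, E4})" using s4_S2 a by blast
  also have "\<dots> \<longleftrightarrow> E1 \<in> set xs" using a by auto
  finally show ?thesis .
qed


lemma wc: "w \<noteq> [] \<Longrightarrow> (\<And>a. w = [a] \<Longrightarrow> P) \<Longrightarrow> (\<And>a b. w = [a, b] \<Longrightarrow> P) \<Longrightarrow>
   (\<And>a b c r. w = a # b # c # r \<Longrightarrow> P) \<Longrightarrow> P"
  by (metis list.exhaust)

lemma s4_mul_mul: "s4_mul x (s4_mul y z) = E1"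
  by (cases x; cases y; cases z; simp)

lemma s4_long: "3 \<le> length w \<Longrightarrow> prodw s4_mul \<sigma> w = E1"
proof -
  assume "3 \<le> length w"
  then obtain a b c r where w: "w = a # b # c # r"
    by (metis One_nat_def Suc_le_length_iff numeral_3_eq_3)
  show ?thesis by (simp add: w s4_mul_mul)
qed

lemma w4: "w \<noteq> [] \<Longrightarrow> prodw s4_mul (\<lambda>n. if n = x then E4 else E2) w \<in> {E1, E4} \<longleftrightarrow>
   (3 \<le> length w \<or> w = [x] \<or> (\<exists>y. w = [x, y]))"
  by (erule wc) (auto simp: s4_mul_mul)

lemma w3: "w \<noteq> [] \<Longrightarrow> prodw s4_mul (\<lambda>n. if n = y then E3 else E2) w = E1 \<longleftrightarrow>
   (3 \<le> length w \<or> (\<exists>a. w = [a, y]) \<or> (\<exists>b. w = [y, b]))"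
  by (erule wc) (auto simp: s4_mul_mul)

lemma w3' : "w \<noteq> [] \<Longrightarrow> prodw s4_mul (\<lambda>n. if n = y then E3 else E2) w \<noteq> E4"
  by (erule wc) (auto simp: s4_mul_mul)

lemma w2: "w \<noteq> [] \<Longrightarrow> prodw s4_mul (\<lambda>n. E2) w = E1 \<longleftrightarrow> 3 \<le> length w"
  by (erule wc) (auto simp: s4_mul_mul)

lemma w2' : "w \<noteq> [] \<Longrightarrow> prodw s4_mul (\<lambda>n. E2) w \<noteq> E4"
  by (erule wc) (auto simp: s4_mul_mul)

lemma T4: "eval s4_add s4_mul (\<lambda>n. if n = x then E4 else E2) t \<in> {E1, E4} \<longleftrightarrow>
   (\<exists>w\<in>set (wl t). 3 \<le> length w \<or> w = [x] \<or> (\<exists>y. w = [x, y]))"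
proof -
  let ?f = "prodw s4_mul (\<lambda>n. if n = x then E4 else E2)"
  have "eval s4_add s4_mul (\<lambda>n. if n = x then E4 else E2) t \<in> {E1, E4} \<longleftrightarrow>
     (\<exists>v\<in>set (map ?f (wl t)). v \<in> {E1, E4})"
    unfolding S4.eval_wl by (rule s4_S2) (simp add: wl_ne)
  also have "\<dots> \<longleftrightarrow> (\<exists>w\<in>set (wl t). ?f w \<in> {E1, E4})" unfolding set_map by blast
  also have "\<dots> \<longleftrightarrow> (\<exists>w\<in>set (wl t). 3 \<le> length w \<or> w = [x] \<or> (\<exists>y. w = [x, y]))"
    proof (rule bex_cong[OF refl])
    fix w assume "w \<in> set (wl t)"
    then show "?f w \<in> {E1, E4} \<longleftrightarrow> (3 \<le> length w \<or> w = [x] \<or> (\<exists>y. w = [x, y]))"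
      by (rule w4[OF wl_words])
  qed
  finally show ?thesis .
qed

lemma T3: "eval s4_add s4_mul (\<lambda>n. if n = y then E3 else E2) t = E1 \<longleftrightarrow>
   (\<exists>w\<in>set (wl t). 3 \<le> length w \<or> (\<exists>a. w = [a, y]) \<or> (\<exists>b. w = [y, b]))"
proof -
  let ?f = "prodw s4_mul (\<lambda>n. if n = y then E3 else E2)"
  have "E4 \<notin> set (map ?f (wl t))" using w3' wl_words by (metis (no_types, lifting) imageE set_map)
  then have "eval s4_add s4_mul (\<lambda>n. if n = y then E3 else E2) t = E1 \<longleftrightarrow>
     E1 \<in> set (map ?f (wl t))"
    unfolding S4.eval_wl by (intro s4_S1) (simp_all add: wl_ne)
  also have "\<dots> \<longleftrightarrow> (\<exists>w\<in>set (wl t). ?f w = E1)"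
    unfolding set_map image_iff by (intro bex_cong refl) (rule eq_commute)
  also have "\<dots> \<longleftrightarrow> (\<exists>w\<in>set (wl t). 3 \<le> length w \<or> (\<exists>a. w = [a, y]) \<or> (\<exists>b. w = [y, b]))"
    proof (rule bex_cong[OF refl])
    fix w assume "w \<in> set (wl t)"
    then show "?f w = E1 \<longleftrightarrow> (3 \<le> length w \<or> (\<exists>a. w = [a, y]) \<or> (\<exists>b. w = [y, b]))"
      by (rule w3[OF wl_words])
  qed
  finally show ?thesis .
qed

lemma T2: "eval s4_add s4_mul (\<lambda>n. E2) t = E1 \<longleftrightarrow> (\<exists>w\<in>set (wl t). 3 \<le> length w)"
proof -
  let ?f = "prodw s4_mul (\<lambda>n. E2)"
  have "E4 \<notin> set (map ?f (wl t))" using w2' wl_words by (metis (no_types, lifting) imageE set_map)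
  then have "eval s4_add s4_mul (\<lambda>n. E2) t = E1 \<longleftrightarrow> E1 \<in> set (map ?f (wl t))"
    unfolding S4.eval_wl by (intro s4_S1) (simp_all add: wl_ne)
  also have "\<dots> \<longleftrightarrow> (\<exists>w\<in>set (wl t). ?f w = E1)"
    unfolding set_map image_iff by (intro bex_cong refl) (rule eq_commute)
  also have "\<dots> \<longleftrightarrow> (\<exists>w\<in>set (wl t). 3 \<le> length w)"
    proof (rule bex_cong[OF refl])
    fix w assume "w \<in> set (wl t)"
    then show "?f w = E1 \<longleftrightarrow> 3 \<le> length w"
      by (rule w2[OF wl_words])
  qed
  finally show ?thesis .
qed


context M
begin

lemma K:
  assumes sat: "satisfies s4_add s4_mul (u, v)"
  shows "le (eval add mul \<rho> u) (eval add mul \<rho> v)"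
proof -
  define V where "V = eval add mul \<rho> v"
  have E: "\<And>\<sigma>. eval s4_add s4_mul \<sigma> u = eval s4_add s4_mul \<sigma> v"
    using sat by (simp add: satisfies_def)
  have memV: "\<And>w. w \<in> set (wl v) \<Longrightarrow> le (prodw mul \<rho> w) V"
    unfolding V_def eval_wl by (rule mem_le_lsum) simp
  have pw: "\<forall>w\<in>set (wl u). le (prodw mul \<rho> w) V"
  proof
    fix w assume wu: "w \<in> set (wl u)"
    show "le (prodw mul \<rho> w) V"
    proof (cases "\<exists>w'\<in>set (wl v). 3 \<le> length w'")
      case True
      then obtain w' where w': "w' \<in> set (wl v)" "3 \<le> length w'" by blast
      show ?thesis by (rule le_trans[OF long_top[OF w'(2)] memV[OF w'(1)]])
    next
      case nolong: False
      from wl_words[OF wu] show ?thesis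
      proof (rule wc)
        fix x assume w: "w = [x]"
        have "eval s4_add s4_mul (\<lambda>n. if n = x then E4 else E2) u \<in> {E1, E4}"
          using T4[of x u] wu w by blast
        then have "eval s4_add s4_mul (\<lambda>n. if n = x then E4 else E2) v \<in> {E1, E4}"
          by (simp only: E)
        then have "\<exists>w\<in>set (wl v). 3 \<le> length w \<or> w = [x] \<or> (\<exists>y. w = [x, y])"
          using T4[of x v] by blast
        then obtain w' where w': "w' \<in> set (wl v)" "w' = [x] \<or> (\<exists>y. w' = [x, y])"
          using nolong by blast
        show ?thesis
        proof (cases "w' = [x]")
          case True then show ?thesis using memV[OF w'(1)] w by simp
        next
          case False
          then obtain y where "w' = [x, y]" using w' by blast
          then have "le (mul (\<rho> x) (\<rho> y)) V" using memV[OF w'(1)] by simp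
          then show ?thesis using w le_trans[OF lA] by simp
        qed
      next
        fix x y assume w: "w = [x, y]"
        have "eval s4_add s4_mul (\<lambda>n. if n = x then E4 else E2) u \<in> {E1, E4}"
          using T4[of x u] wu w by blast
        then have "eval s4_add s4_mul (\<lambda>n. if n = x then E4 else E2) v \<in> {E1, E4}"
          by (simp only: E)
        then have h4: "\<exists>w\<in>set (wl v). 3 \<le> length w \<or> w = [x] \<or> (\<exists>y. w = [x, y])"
          using T4[of x v] by blast
        have "eval s4_add s4_mul (\<lambda>n. if n = y then E3 else E2) u = E1"
          using T3[of y u] wu w by blast
        then have "eval s4_add s4_mul (\<lambda>n. if n = y then E3 else E2) v = E1"
          by (simp only: E)
        then have h3y: "\<exists>w\<in>set (wl v). 3 \<le> length w \<or> (\<exists>a. w = [a, y]) \<or> (\<exists>b. w = [y, b])"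
          using T3[of y v] by blast
        have "eval s4_add s4_mul (\<lambda>n. if n = x then E3 else E2) u = E1"
          using T3[of x u] wu w by blast
        then have "eval s4_add s4_mul (\<lambda>n. if n = x then E3 else E2) v = E1"
          by (simp only: E)
        then have h3x: "\<exists>w\<in>set (wl v). 3 \<le> length w \<or> (\<exists>a. w = [a, x]) \<or> (\<exists>b. w = [x, b])"
          using T3[of x v] by blast
        have fx: "\<exists>z. le (mul (\<rho> x) (\<rho> z)) V"
        proof -
          obtain w' where w': "w' \<in> set (wl v)" "w' = [x] \<or> (\<exists>y. w' = [x, y])"
            using h4 nolong by blast
          show ?thesis
          proof (cases "w' = [x]")
            case False
            then obtain z where "w' = [x, z]" using w' by blast
            then show ?thesis using memV[OF w'(1)] by auto
          next
            case True
            then have lx: "le (\<rho> x) V" using memV[OF w'(1)] by simp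
            obtain w'' where w'': "w'' \<in> set (wl v)" "(\<exists>a. w'' = [a, x]) \<or> (\<exists>b. w'' = [x, b])"
              using h3x nolong by blast
            show ?thesis
            proof (cases "\<exists>b. w'' = [x, b]")
              case True
              then obtain b where "w'' = [x, b]" by blast
              then show ?thesis using memV[OF w''(1)] by auto
            next
              case False
              then obtain a where "w'' = [a, x]" using w'' by blast
              then have "le (mul (\<rho> a) (\<rho> x)) V" using memV[OF w''(1)] by simp
              then have "le (add (\<rho> x) (mul (\<rho> a) (\<rho> x))) V" using lx le_sup by blast
              then show ?thesis using le_trans[OF lB] by blast
            qed
          qed
        qed
        then obtain z where z: "le (mul (\<rho> x) (\<rho> z)) V" by blast
        obtain w' where w': "w' \<in> set (wl v)" "(\<exists>a. w' = [a, y]) \<or> (\<exists>b. w' = [y, b])"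
          using h3y nolong by blast
        have "le (mul (\<rho> x) (\<rho> y)) V"
        proof (cases "\<exists>a. w' = [a, y]")
          case True
          then obtain a where "w' = [a, y]" by blast
          then have "le (mul (\<rho> a) (\<rho> y)) V" using memV[OF w'(1)] by simp
          then have "le (add (mul (\<rho> x) (\<rho> z)) (mul (\<rho> a) (\<rho> y))) V" using z le_sup by blast
          then show ?thesis by (rule le_trans[OF lE])
        next
          case False
          then obtain b where "w' = [y, b]" using w' by blast
          then have "le (mul (\<rho> y) (\<rho> b)) V" using memV[OF w'(1)] by simp
          then have "le (add (mul (\<rho> x) (\<rho> z)) (mul (\<rho> y) (\<rho> b))) V" using z le_sup by blast
          then show ?thesis by (rule le_trans[OF lD])
        qed
        then show ?thesis using w by simp
      next
        fix a b c r assume w: "w = a # b # c # r"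
        have "eval s4_add s4_mul (\<lambda>n. E2) u = E1" using T2[of u] wu w by force
        then have "eval s4_add s4_mul (\<lambda>n. E2) v = E1" by (simp only: E)
        then show ?thesis using T2[of v] nolong by blast
      qed
    qed
  qed
  have "le (lsum add (map (prodw mul \<rho>) (wl u))) V"
    using pw by (subst le_lsum) (auto simp: wl_ne)
  then show ?thesis unfolding V_def eval_wl[of \<rho> u] .
qed

end

lemma s4_id_inst:
  "satisfies add mul e \<Longrightarrow>
   eval add mul (\<lambda>n. if n = 0 then x else if n = 1 then y else if n = 2 then z else w) (fst e) =
   eval add mul (\<lambda>n. if n = 0 then x else if n = 1 then y else if n = 2 then z else w) (snd e)"
  by (simp add: satisfies_def)


lemma s4_sat_aassoc: "satisfies s4_add s4_mul (Plus (Plus (Var 0) (Var 1)) (Var 2), Plus (Var 0) (Plus (Var 1) (Var 2)))"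
  using S4.aassoc by (simp add: satisfies_def)
lemma s4_sat_acomm: "satisfies s4_add s4_mul (Plus (Var 0) (Var 1), Plus (Var 1) (Var 0))"
  using S4.acomm by (simp add: satisfies_def)
lemma s4_sat_aidem: "satisfies s4_add s4_mul (Plus (Var 0) (Var 0), Var 0)"
  using S4.aidem by (simp add: satisfies_def)
lemma s4_sat_massoc: "satisfies s4_add s4_mul (Times (Times (Var 0) (Var 1)) (Var 2), Times (Var 0) (Times (Var 1) (Var 2)))"
  using S4.massoc by (simp add: satisfies_def)
lemma s4_sat_ldist: "satisfies s4_add s4_mul (Times (Var 0) (Plus (Var 1) (Var 2)), Plus (Times (Var 0) (Var 1)) (Times (Var 0) (Var 2)))"
  using S4.ldist by (simp add: satisfies_def)
lemma s4_sat_rdist: "satisfies s4_add s4_mul (Times (Plus (Var 0) (Var 1)) (Var 2), Plus (Times (Var 0) (Var 2)) (Times (Var 1) (Var 2)))"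
  using S4.rdist by (simp add: satisfies_def)

lemma s4_i1: "s4_mul x y = s4_add (s4_mul x y) x" by (cases x; cases y; simp)
lemma s4_i2: "s4_add x (s4_mul y x) = s4_add (s4_add x (s4_mul y x)) (s4_mul x y)" by (cases x; cases y; simp)
lemma s4_i3: "s4_mul (s4_mul x1 x2) x3 = s4_add (s4_mul (s4_mul x1 x2) x3) x4"
  by (cases x1; cases x2; cases x3; cases x4; simp)
lemma s4_i4: "s4_add (s4_mul x1 x2) (s4_mul x3 x4) = s4_add (s4_add (s4_mul x1 x2) (s4_mul x3 x4)) (s4_mul x1 x3)"
  by (cases x1; cases x2; cases x3; cases x4; simp)
lemma s4_i5: "s4_add (s4_mul x1 x2) (s4_mul x3 x4) = s4_add (s4_add (s4_mul x1 x2) (s4_mul x3 x4)) (s4_mul x1 x4)"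
  by (cases x1; cases x2; cases x3; cases x4; simp)

lemma s4_sat_i1: "satisfies s4_add s4_mul (Times (Var 0) (Var 1), Plus (Times (Var 0) (Var 1)) (Var 0))"
  using s4_i1 by (simp add: satisfies_def)
lemma s4_sat_i2: "satisfies s4_add s4_mul (Plus (Var 0) (Times (Var 1) (Var 0)), Plus (Plus (Var 0) (Times (Var 1) (Var 0))) (Times (Var 0) (Var 1)))"
  using s4_i2 by (simp add: satisfies_def)
lemma s4_sat_i3: "satisfies s4_add s4_mul (Times (Times (Var 0) (Var 1)) (Var 2), Plus (Times (Times (Var 0) (Var 1)) (Var 2)) (Var 3))"
  using s4_i3 by (simp add: satisfies_def)
lemma s4_sat_i4: "satisfies s4_add s4_mul (Plus (Times (Var 0) (Var 1)) (Times (Var 2) (Var 3)), Plus (Plus (Times (Var 0) (Var 1)) (Times (Var 2) (Var 3))) (Times (Var 0) (Var 2)))"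
  using s4_i4 by (simp add: satisfies_def)
lemma s4_sat_i5: "satisfies s4_add s4_mul (Plus (Times (Var 0) (Var 1)) (Times (Var 2) (Var 3)), Plus (Plus (Times (Var 0) (Var 1)) (Times (Var 2) (Var 3))) (Times (Var 0) (Var 3)))"
  using s4_i5 by (simp add: satisfies_def)

theorem proposition5p2:
  fixes add mul :: "'a \<Rightarrow> 'a \<Rightarrow> 'a"
  shows "in_V_S4 add mul \<longleftrightarrow>
    ai_semiring add mul \<and>
    (\<forall>x y. mul x y = add (mul x y) x) \<and>
    (\<forall>x y. add x (mul y x) = add (add x (mul y x)) (mul x y)) \<and>
    (\<forall>x1 x2 x3 x4. mul (mul x1 x2) x3 = add (mul (mul x1 x2) x3) x4) \<and>
    (\<forall>x1 x2 x3 x4. add (mul x1 x2) (mul x3 x4) = add (add (mul x1 x2) (mul x3 x4)) (mul x1 x3)) \<and>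
    (\<forall>x1 x2 x3 x4. add (mul x1 x2) (mul x3 x4) = add (add (mul x1 x2) (mul x3 x4)) (mul x1 x4))"
proof
  assume V: "in_V_S4 add mul"
  have I: "\<And>e. satisfies s4_add s4_mul e \<Longrightarrow> satisfies add mul e"
    using V unfolding in_V_S4_def Id_S4_def by blast
  note J = s4_id_inst[OF I]
  show "ai_semiring add mul \<and>
    (\<forall>x y. mul x y = add (mul x y) x) \<and>
    (\<forall>x y. add x (mul y x) = add (add x (mul y x)) (mul x y)) \<and>
    (\<forall>x1 x2 x3 x4. mul (mul x1 x2) x3 = add (mul (mul x1 x2) x3) x4) \<and>
    (\<forall>x1 x2 x3 x4. add (mul x1 x2) (mul x3 x4) = add (add (mul x1 x2) (mul x3 x4)) (mul x1 x3)) \<and>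
    (\<forall>x1 x2 x3 x4. add (mul x1 x2) (mul x3 x4) = add (add (mul x1 x2) (mul x3 x4)) (mul x1 x4))"
    unfolding ai_semiring_def
    apply (intro conjI allI)
    subgoal for x y z using J[OF s4_sat_aassoc, of x y z x] by simp
    subgoal for x y using J[OF s4_sat_acomm, of x y x x] by simp
    subgoal for x using J[OF s4_sat_aidem, of x x x x] by simp
    subgoal for x y z using J[OF s4_sat_massoc, of x y z x] by simp
    subgoal for x y z using J[OF s4_sat_ldist, of x y z x] by simp
    subgoal for x y z using J[OF s4_sat_rdist, of x y z x] by simp
    subgoal for x y using J[OF s4_sat_i1, of x y x x] by simp
    subgoal for x y using J[OF s4_sat_i2, of x y x x] by simp
    subgoal for x1 x2 x3 x4 using J[OF s4_sat_i3, of x1 x2 x3 x4] by simp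
    subgoal for x1 x2 x3 x4 using J[OF s4_sat_i4, of x1 x2 x3 x4] by simp
    subgoal for x1 x2 x3 x4 using J[OF s4_sat_i5, of x1 x2 x3 x4] by simp
    done
next
  assume H: "ai_semiring add mul \<and>
    (\<forall>x y. mul x y = add (mul x y) x) \<and>
    (\<forall>x y. add x (mul y x) = add (add x (mul y x)) (mul x y)) \<and>
    (\<forall>x1 x2 x3 x4. mul (mul x1 x2) x3 = add (mul (mul x1 x2) x3) x4) \<and>
    (\<forall>x1 x2 x3 x4. add (mul x1 x2) (mul x3 x4) = add (add (mul x1 x2) (mul x3 x4)) (mul x1 x3)) \<and>
    (\<forall>x1 x2 x3 x4. add (mul x1 x2) (mul x3 x4) = add (add (mul x1 x2) (mul x3 x4)) (mul x1 x4))"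
  note H' = H[unfolded ai_semiring_def]
  have h1: "(\<forall>x y z. add (add x y) z = add x (add y z))" using H' by (elim conjE) assumption
  have h2: "(\<forall>x y. add x y = add y x)" using H' by (elim conjE) assumption
  have h3: "(\<forall>x. add x x = x)" using H' by (elim conjE) assumption
  have h4: "(\<forall>x y z. mul (mul x y) z = mul x (mul y z))" using H' by (elim conjE) assumption
  have h5: "(\<forall>x y z. mul x (add y z) = add (mul x y) (mul x z))" using H' by (elim conjE) assumption
  have h6: "(\<forall>x y z. mul (add x y) z = add (mul x z) (mul y z))" using H' by (elim conjE) assumption
  have h7: "(\<forall>x y. mul x y = add (mul x y) x)" using H' by (elim conjE) assumption
  have h8: "(\<forall>x y. add x (mul y x) = add (add x (mul y x)) (mul x y))" using H' by (elim conjE) assumption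
  have h9: "(\<forall>x1 x2 x3 x4. mul (mul x1 x2) x3 = add (mul (mul x1 x2) x3) x4)" using H' by (elim conjE) assumption
  have h10: "(\<forall>x1 x2 x3 x4. add (mul x1 x2) (mul x3 x4) = add (add (mul x1 x2) (mul x3 x4)) (mul x1 x3))" using H' by (elim conjE) assumption
  have h11: "(\<forall>x1 x2 x3 x4. add (mul x1 x2) (mul x3 x4) = add (add (mul x1 x2) (mul x3 x4)) (mul x1 x4))" using H' by (elim conjE) assumption
  interpret M add mul
    apply unfold_locales
    apply (rule h1[rule_format])
    apply (rule h2[rule_format])
    apply (rule h3[rule_format])
    apply (rule h4[rule_format])
    apply (rule h5[rule_format])
    apply (rule h6[rule_format])
    apply (rule h7[rule_format])
    apply (rule h8[rule_format])
    apply (rule h9[rule_format])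
    apply (rule h10[rule_format])
    apply (rule h11[rule_format])
    done
  show "in_V_S4 add mul"
    unfolding in_V_S4_def Id_S4_def
  proof
    fix e assume "e \<in> {e. satisfies s4_add s4_mul e}"
    then have s: "satisfies s4_add s4_mul e" by simp
    obtain u v where e: "e = (u, v)" by (cases e)
    have s1: "satisfies s4_add s4_mul (u, v)" using s e by simp
    have s2: "satisfies s4_add s4_mul (v, u)" using s1 by (simp add: satisfies_def)
    show "satisfies add mul e"
      unfolding e satisfies_def using K[OF s1] K[OF s2] le_antisym by simp
  qed
qed

end
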